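(* Let $\sigma_1=1.5002$ and $2\le H\le T$. Then \[ \int_H^T\log|\zeta(\sigma_1+it)|\,dt\ge -1.7655. \]
   Context: $\zeta$ is the Riemann zeta function. *)

theory Defs
  imports "HOL-Analysis.Analysis"
begin

text \<open>Riemann zeta function on the half-plane Re s > 1, given by its Dirichlet series
  (the only region needed here). Outside Re s > 1 the value is irrelevant.\<close>
definition zeta :: "complex \<Rightarrow> complex" where
  "zeta s = (\<Sum>n. 1 / (of_nat (Suc n)) powr s)"

end

theory Submission
  imports Defs "HOL-Number_Theory.Prime_Powers" "HOL-Real_Asymp.Real_Asymp"
begin

definition ps :: "nat \<Rightarrow> complex \<Rightarrow> complex" where
  "ps n s = of_nat n powr (-s)"

lemma ps_0 [simp]: "ps 0 s = 0"
  by (simp add: ps_def)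

lemma norm_ps: "cmod (ps n s) = real n powr (- Re s)"
  unfolding ps_def by (subst norm_powr_real_powr) auto

lemma norm_ps_le: assumes "a \<le> Re s" shows "cmod (ps n s) \<le> real n powr (- a)"
proof (cases "n = 0")
  case False
  then have "real n \<ge> 1" by simp
  then show ?thesis unfolding norm_ps using assms by (intro powr_mono) auto
qed (simp add: norm_ps)

lemma ps_mult: "ps (m * k) s = ps m s * ps k s"
  unfolding ps_def of_nat_mult by (rule powr_times_real) auto

lemma ln_le_powr: "ln (real n) \<le> 4 * real n powr (1/4)"
proof (cases "n = 0")
  case False
  then have pos: "real n > 0" by simp
  have "ln (real n powr (1/4)) \<le> real n powr (1/4)"
    using ln_bound[of "real n powr (1/4)"] pos by simp
  moreover have "ln (real n powr (1/4)) = ln (real n) / 4"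
    using pos by (simp add: ln_powr)
  ultimately show ?thesis by simp
qed simp

lemma summable_powr: "a > 1 \<Longrightarrow> summable (\<lambda>n. real n powr (-a))"
  by (subst summable_real_powr_iff) auto

lemma ln_powr_bound: "ln (real n) * real n powr (- (3/2)) \<le> 4 * real n powr (- (5/4))"
proof (cases "n = 0")
  case False
  then have pos: "real n > 0" by simp
  have "ln (real n) * real n powr (- (3/2)) \<le> 4 * real n powr (1/4) * real n powr (- (3/2))"
    by (intro mult_right_mono ln_le_powr) auto
  also have "\<dots> = 4 * real n powr (- (5/4))"
    using pos by (simp add: powr_add[symmetric])
  finally show ?thesis .
qed simp

lemma summable_ln_powr: "summable (\<lambda>n. 4 * real n powr (- (5/4)))"
  by (intro summable_mult summable_powr) auto

lemma ps_deriv: "((\<lambda>s. ps n s) has_field_derivative (- of_real (ln (real n)) * ps n s)) (at s)"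
proof (cases "n = 0")
  case True
  then show ?thesis by (simp add: ps_def)
next
  case False
  have "((\<lambda>s. of_nat n powr (-s)) has_field_derivative (Ln (of_nat n) * of_nat n powr (-s)) * (-1)) (at s)"
    using False by (intro DERIV_chain2[OF has_field_derivative_powr_right] derivative_eq_intros) auto
  then show ?thesis using False unfolding ps_def by (simp add: algebra_simps)
qed

lemma ln_nat_nonneg [simp]: "0 \<le> ln (real n)"
  by (cases n) auto

definition S32 :: "complex set" where "S32 = {s. 3/2 < Re s}"

lemma S32_props: "convex S32" "open S32"
  unfolding S32_def using convex_halfspace_Re_gt[of "3/2"] open_halfspace_Re_gt[of "3/2"] by auto

lemma dser_summable:
  assumes "\<And>n. cmod (f n) \<le> 1" "3/2 \<le> Re s"
  shows "summable (\<lambda>n. cmod (f n * ps n s))"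
proof (rule summable_comparison_test[OF _ summable_powr[of "3/2"]])
  show "\<exists>N. \<forall>n\<ge>N. norm (cmod (f n * ps n s)) \<le> real n powr - (3 / 2)"
  proof (intro exI allI impI)
    fix n :: nat
    have "cmod (f n) * cmod (ps n s) \<le> 1 * real n powr - (3 / 2)"
      using assms by (intro mult_mono norm_ps_le) auto
    then show "norm (cmod (f n * ps n s)) \<le> real n powr - (3 / 2)" by (simp add: norm_mult)
  qed
qed simp

lemma dser_summable': "(\<And>n. cmod (f n) \<le> 1) \<Longrightarrow> 3/2 \<le> Re s \<Longrightarrow> summable (\<lambda>n. f n * ps n s)"
  by (rule summable_norm_cancel, rule dser_summable)

lemma dser_deriv:
  assumes f: "\<And>n. cmod (f n) \<le> 1" and s: "s \<in> S32"
  shows "((\<lambda>s. \<Sum>n. f n * ps n s) has_field_derivative (\<Sum>n. - f n * of_real (ln (real n)) * ps n s)) (at s)"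
proof (rule has_field_derivative_series'(2)[OF S32_props(1)])
  show "((\<lambda>x. f n * ps n x) has_field_derivative - f n * of_real (ln (real n)) * ps n x) (at x within S32)"
    if "x \<in> S32" for n x
    using DERIV_cmult[OF ps_deriv[of n x], of "f n"]
    by (auto intro: has_field_derivative_at_within simp: algebra_simps)
  show "uniformly_convergent_on S32 (\<lambda>n x. \<Sum>i<n. - f i * of_real (ln (real i)) * ps i x)"
  proof (rule Weierstrass_m_test'_ev[OF _ summable_ln_powr])
    show "\<forall>\<^sub>F n in sequentially. \<forall>x\<in>S32. cmod (- f n * of_real (ln (real n)) * ps n x) \<le> 4 * real n powr - (5 / 4)"
    proof (intro always_eventually allI ballI)
      fix n x assume x: "x \<in> S32"
      have "cmod (- f n * of_real (ln (real n)) * ps n x) = cmod (f n) * ln (real n) * cmod (ps n x)"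
        by (cases "n = 0") (auto simp: norm_mult)
      also have "\<dots> \<le> 1 * ln (real n) * real n powr - (3 / 2)"
      proof (rule mult_mono)
        show "cmod (f n) * ln (real n) \<le> 1 * ln (real n)"
          using f[of n] ln_ge_zero[of "real n"] mult_right_mono[of "cmod (f n)" 1 "ln (real n)"] by (cases "n = 0") auto
      qed (use x in \<open>auto simp: S32_def ln_nat_nonneg intro!: norm_ps_le\<close>)
      also have "\<dots> \<le> 4 * real n powr - (5 / 4)" using ln_powr_bound by simp
      finally show "cmod (- f n * of_real (ln (real n)) * ps n x) \<le> 4 * real n powr - (5 / 4)" .
    qed
  qed
  show "2 \<in> S32" by (simp add: S32_def)
  show "summable (\<lambda>n. f n * ps n 2)" by (rule dser_summable'[OF f]) simp
  show "s \<in> interior S32" using s S32_props(2) by (simp add: interior_open)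
qed

lemma prod_infsum:
  fixes A B :: "nat \<Rightarrow> complex"
  assumes sA: "summable (\<lambda>n. norm (A n))" and sB: "summable (\<lambda>n. norm (B n))"
  shows "(\<lambda>p. norm (case p of (m,k) \<Rightarrow> A m * B k)) summable_on (UNIV \<times> UNIV)"
    and "infsum (\<lambda>(m,k). A m * B k) (UNIV \<times> UNIV) = suminf A * suminf B"
proof -
  have nA: "(\<lambda>n. norm (A n)) summable_on UNIV"
    using sA by (rule summable_nonneg_imp_summable_on) auto
  have nB: "(\<lambda>n. norm (B n)) summable_on UNIV"
    using sB by (rule summable_nonneg_imp_summable_on) auto
  have iB: "infsum (\<lambda>k. norm (A m * B k)) UNIV = norm (A m) * infsum (\<lambda>k. norm (B k)) UNIV" for m
    by (simp add: norm_mult infsum_cmult_right nB)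
  show abs: "(\<lambda>p. norm (case p of (m,k) \<Rightarrow> A m * B k)) summable_on (UNIV \<times> UNIV)"
  proof (rule iffD2[OF Infinite_Sum.abs_summable_on_Sigma_iff[where f="\<lambda>p. case p of (m,k) \<Rightarrow> A m * B k" and A=UNIV and B="\<lambda>_. UNIV"]], intro conjI ballI)
    show "(\<lambda>y. norm (case (m, y) of (m, k) \<Rightarrow> A m * B k)) summable_on UNIV" for m
      by (simp add: norm_mult summable_on_cmult_right nB)
    show "(\<lambda>x. norm (infsum (\<lambda>y. norm (case (x, y) of (m, k) \<Rightarrow> A m * B k)) UNIV)) summable_on UNIV"
    proof -
      have "infsum (\<lambda>k. cmod (B k)) UNIV \<ge> 0" by (rule infsum_nonneg) auto
      then show ?thesis using iB by (simp add: summable_on_cmult_left nA)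
    qed
  qed
  have hA: "infsum A UNIV = suminf A"
    by (rule infsumI, rule norm_summable_imp_has_sum[OF sA], rule summable_sums, rule summable_norm_cancel[OF sA])
  have hB: "infsum B UNIV = suminf B"
    by (rule infsumI, rule norm_summable_imp_has_sum[OF sB], rule summable_sums, rule summable_norm_cancel[OF sB])
  have sBu: "B summable_on UNIV" using norm_summable_imp_summable_on[OF sB] .
  have sAu: "A summable_on UNIV" using norm_summable_imp_summable_on[OF sA] .
  have "infsum (\<lambda>(m,k). A m * B k) (UNIV \<times> UNIV) = infsum (\<lambda>m. infsum (\<lambda>k. A m * B k) UNIV) UNIV"
    using infsum_Sigma_banach[OF abs_summable_summable[OF abs]] by simp
  also have "\<dots> = infsum (\<lambda>m. A m * infsum B UNIV) UNIV"
    by (simp add: infsum_cmult_right sBu)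
  also have "\<dots> = infsum A UNIV * infsum B UNIV"
    by (simp add: infsum_cmult_left sAu)
  finally show "infsum (\<lambda>(m,k). A m * B k) (UNIV \<times> UNIV) = suminf A * suminf B"
    using hA hB by simp
qed

lemma mangoldt_nonneg: "0 \<le> (mangoldt n :: real)"
  by (auto simp: mangoldt_def dest: primepow_gt_Suc_0 intro!: ln_ge_zero)

lemma mangoldt_le_ln: "(mangoldt n :: real) \<le> ln (real n)"
proof (cases "primepow n")
  case True
  then have n: "n > Suc 0" by (rule primepow_gt_Suc_0)
  then have "aprimedivisor n > 0" "aprimedivisor n \<le> n"
    by (auto intro: aprimedivisor_pos_nat aprimedivisor_le_nat)
  then show ?thesis using True by (simp add: mangoldt_def)
qed (simp add: mangoldt_def)

lemma norm_mangoldt: "cmod (mangoldt n :: complex) = mangoldt n"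
proof -
  have "cmod (mangoldt n :: complex) = cmod (of_real (mangoldt n))" by simp
  also have "\<dots> = mangoldt n" using mangoldt_nonneg[of n] by (simp only: norm_of_real)
  finally show ?thesis .
qed

lemma ln_series_summable:
  assumes "\<And>n. cmod (f n) \<le> ln (real n)" "3/2 \<le> Re s"
  shows "summable (\<lambda>n. cmod (f n * ps n s))"
proof (rule summable_comparison_test[OF _ summable_ln_powr])
  show "\<exists>N. \<forall>n\<ge>N. norm (cmod (f n * ps n s)) \<le> 4 * real n powr - (5 / 4)"
  proof (intro exI allI impI)
    fix n :: nat
    have "cmod (f n) * cmod (ps n s) \<le> ln (real n) * real n powr - (3 / 2)"
      using assms by (intro mult_mono norm_ps_le) auto
    also have "\<dots> \<le> 4 * real n powr - (5 / 4)" by (rule ln_powr_bound)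
    finally show "norm (cmod (f n * ps n s)) \<le> 4 * real n powr - (5 / 4)" by (simp add: norm_mult)
  qed
qed

lemma conv:
  assumes s: "3/2 \<le> Re s"
  shows "(\<Sum>n. ps n s) * (\<Sum>n. mangoldt n * ps n s) = (\<Sum>n. of_real (ln (real n)) * ps n s)"
proof -
  define A where "A n = ps n s" for n
  define B where "B n = mangoldt n * ps n s" for n
  define F where "F = (\<lambda>p. case p of (m,k) \<Rightarrow> A m * B k)"
  define Gq where "Gq = (\<lambda>p. case p of (n,k) \<Rightarrow> ps n s * mangoldt k)"
  define P where "P = {1::nat..} \<times> {1::nat..}"
  define Q where "Q = Sigma {1::nat..} (\<lambda>n. {k. k dvd n})"
  define \<phi> where "\<phi> = (\<lambda>p::nat\<times>nat. case p of (m,k) \<Rightarrow> (m*k, k))"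
  have sA: "summable (\<lambda>n. norm (A n))"
    using dser_summable[of "\<lambda>_. 1" s] s by (simp add: A_def)
  have sB: "summable (\<lambda>n. norm (B n))"
    unfolding B_def by (rule ln_series_summable[OF _ s]) (simp add: norm_mangoldt mangoldt_le_ln)
  note pr = prod_infsum[OF sA sB]
  have Fs: "F summable_on (UNIV \<times> UNIV)"
    using abs_summable_summable[OF pr(1)] by (simp add: F_def)
  have "suminf A * suminf B = infsum F (UNIV \<times> UNIV)" using pr(2) by (simp add: F_def)
  also have "\<dots> = infsum F P"
    by (rule infsum_cong_neutral) (auto simp: P_def F_def A_def B_def Suc_le_eq intro!: Nat.gr0I)
  also have "\<dots> = infsum (\<lambda>x. Gq (\<phi> x)) P"
    by (rule infsum_cong) (auto simp: P_def F_def A_def B_def Gq_def \<phi>_def ps_mult)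
  also have bij: "bij_betw \<phi> P Q"
  proof (rule bij_betw_byWitness[where f' = "\<lambda>p. case p of (n,k) \<Rightarrow> (n div k, k)"])
    show "\<forall>a\<in>P. (case \<phi> a of (n, k) \<Rightarrow> (n div k, k)) = a" by (auto simp: P_def \<phi>_def)
    show "\<forall>a'\<in>Q. \<phi> (case a' of (n, k) \<Rightarrow> (n div k, k)) = a'" by (auto simp: Q_def \<phi>_def)
    show "\<phi> ` P \<subseteq> Q" by (auto simp: P_def Q_def \<phi>_def)
    show "(\<lambda>p. case p of (n, k) \<Rightarrow> (n div k, k)) ` Q \<subseteq> P"
      by (auto simp: P_def Q_def elim!: dvdE)
  qed
  then have "infsum (\<lambda>x. Gq (\<phi> x)) P = infsum Gq Q" by (rule infsum_reindex_bij_betw)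
  also have "\<dots> = infsum (\<lambda>n. infsum (\<lambda>k. Gq (n,k)) {k. k dvd n}) {1..}"
  proof -
    have "F summable_on P" using Fs by (rule summable_on_subset_banach) (auto simp: P_def)
    then have "(\<lambda>x. Gq (\<phi> x)) summable_on P"
      by (rule summable_on_cong[THEN iffD1, rotated]) (auto simp: P_def F_def A_def B_def Gq_def \<phi>_def ps_mult)
    then have "Gq summable_on Q" using summable_on_reindex_bij_betw[OF bij] by blast
    then show ?thesis unfolding Q_def by (rule infsum_Sigma_banach[symmetric])
  qed
  also have "\<dots> = infsum (\<lambda>n. of_real (ln (real n)) * ps n s) {1..}"
  proof (rule infsum_cong)
    fix n :: nat assume n: "n \<in> {1..}"
    have fin: "finite {k. k dvd n}" using n by auto
    have "infsum (\<lambda>k. Gq (n,k)) {k. k dvd n} = (\<Sum>k | k dvd n. ps n s * mangoldt k)"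
      using fin by (simp add: Gq_def)
    also have "\<dots> = ps n s * (\<Sum>k | k dvd n. mangoldt k)" by (simp add: sum_distrib_left)
    also have "\<dots> = ps n s * of_real (ln (real n))" using n by (subst mangoldt_sum) auto
    finally show "infsum (\<lambda>k. Gq (n,k)) {k. k dvd n} = of_real (ln (real n)) * ps n s" by simp
  qed
  also have "\<dots> = infsum (\<lambda>n. of_real (ln (real n)) * ps n s) UNIV"
    by (rule infsum_cong_neutral) (auto simp: not_less_eq_eq)
  also have "\<dots> = (\<Sum>n. of_real (ln (real n)) * ps n s)"
  proof -
    have sL: "summable (\<lambda>n. cmod (of_real (ln (real n)) * ps n s))"
      by (rule ln_series_summable[OF _ s]) simp
    show ?thesis
      by (rule infsumI, rule norm_summable_imp_has_sum[OF sL], rule summable_sums, rule summable_norm_cancel[OF sL])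
  qed
  finally show ?thesis by (simp add: A_def[abs_def] B_def[abs_def])
qed

definition Zs :: "complex \<Rightarrow> complex" where "Zs s = (\<Sum>n. ps n s)"
definition am :: "nat \<Rightarrow> real" where "am n = mangoldt n / ln (real n)"
definition Gs :: "complex \<Rightarrow> complex" where "Gs s = (\<Sum>n. of_real (am n) * ps n s)"

lemma am_nonneg: "0 \<le> am n"
  unfolding am_def using mangoldt_nonneg[of n] by simp

lemma am_le1: "am n \<le> 1"
proof (cases "ln (real n) = 0")
  case False
  then have "ln (real n) > 0" using ln_nat_nonneg[of n] by linarith
  then show ?thesis using mangoldt_le_ln[of n] by (simp add: am_def)
qed (simp add: am_def)

lemma norm_am: "cmod (of_real (am n) :: complex) \<le> 1"
  using am_nonneg[of n] am_le1[of n] by simp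

lemma am_ln: "am n * ln (real n) = mangoldt n"
proof (cases "ln (real n) = 0")
  case True
  then have "mangoldt n = (0::real)" using mangoldt_le_ln[of n] mangoldt_nonneg[of n] by simp
  then show ?thesis using True by (simp add: am_def)
qed (simp add: am_def)

lemma Zs_deriv: "s \<in> S32 \<Longrightarrow> (Zs has_field_derivative - (\<Sum>n. of_real (ln (real n)) * ps n s)) (at s)"
proof -
  assume s: "s \<in> S32"
  have "((\<lambda>s. \<Sum>n. 1 * ps n s) has_field_derivative (\<Sum>n. - 1 * of_real (ln (real n)) * ps n s)) (at s)"
    by (rule dser_deriv[OF _ s]) simp
  moreover have "(\<Sum>n. - 1 * of_real (ln (real n)) * ps n s) = - (\<Sum>n. of_real (ln (real n)) * ps n s)"
  proof -
    have "summable (\<lambda>n. of_real (ln (real n)) * ps n s)"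
      by (rule summable_norm_cancel, rule ln_series_summable) (use s in \<open>auto simp: S32_def\<close>)
    then show ?thesis by (simp add: suminf_minus)
  qed
  ultimately show ?thesis by (simp add: Zs_def[abs_def])
qed

lemma Gs_deriv: "s \<in> S32 \<Longrightarrow> (Gs has_field_derivative - (\<Sum>n. mangoldt n * ps n s)) (at s)"
proof -
  assume s: "s \<in> S32"
  have "((\<lambda>s. \<Sum>n. of_real (am n) * ps n s) has_field_derivative (\<Sum>n. - of_real (am n) * of_real (ln (real n)) * ps n s)) (at s)"
    by (rule dser_deriv[OF norm_am s])
  moreover have "(\<Sum>n. - of_real (am n) * of_real (ln (real n)) * ps n s) = - (\<Sum>n. mangoldt n * ps n s)"
  proof -
    have e: "of_real (am n) * of_real (ln (real n)) = (mangoldt n :: complex)" for n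
      by (metis am_ln of_real_mult of_real_mangoldt)
    have "summable (\<lambda>n. mangoldt n * ps n s)"
      by (rule summable_norm_cancel, rule ln_series_summable)
         (use s in \<open>auto simp: S32_def norm_mangoldt mangoldt_le_ln\<close>)
    then show ?thesis by (simp add: suminf_minus e mult.assoc[symmetric])
  qed
  ultimately show ?thesis by (simp add: Gs_def[abs_def])
qed

lemma h_const: "\<exists>c. \<forall>s\<in>S32. Zs s * exp (- Gs s) = c"
proof (rule has_field_derivative_zero_constant[OF S32_props(1)])
  fix s assume s: "s \<in> S32"
  define L where "L = (\<Sum>n. of_real (ln (real n)) * ps n s)"
  define D where "D = (\<Sum>n. mangoldt n * ps n s)"
  have dE: "((\<lambda>s. exp (- Gs s)) has_field_derivative exp (- Gs s) * (- (- D))) (at s)"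
    unfolding D_def by (rule DERIV_chain2[OF DERIV_exp], rule DERIV_minus, rule Gs_deriv[OF s])
  have "((\<lambda>s. Zs s * exp (- Gs s)) has_field_derivative (- L) * exp (- Gs s) + exp (- Gs s) * (- (- D)) * Zs s) (at s)"
    unfolding L_def by (rule DERIV_mult[OF Zs_deriv[OF s] dE])
  moreover have "(- L) * exp (- Gs s) + exp (- Gs s) * (- (- D)) * Zs s = 0"
    using conv[of s] s by (simp add: S32_def Zs_def L_def D_def algebra_simps)
  ultimately show "((\<lambda>s. Zs s * exp (- Gs s)) has_field_derivative 0) (at s within S32)"
    by (auto intro: has_field_derivative_at_within)
qed

lemma ps_1 [simp]: "ps 1 s = 1" "ps (Suc 0) s = 1"
  by (simp_all add: ps_def)

lemma tail_bound:
  assumes f: "\<And>n. cmod (f n) \<le> 1" and x: "2 \<le> x"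
  shows "cmod ((\<Sum>n. f n * ps n (of_real x)) - f 1) \<le> 2 powr (2 - x) * (\<Sum>n. real n powr -2)"
proof -
  define g where "g n = f n * ps n (of_real x)" for n
  have sg: "summable (\<lambda>n. cmod (g n))"
    unfolding g_def by (rule dser_summable[OF f]) (use x in simp)
  have sg2: "summable (\<lambda>n. cmod (g (n + 2)))"
    using summable_ignore_initial_segment[OF sg, of 2] by simp
  have sp: "summable (\<lambda>n. real n powr -2)" using summable_powr[of 2] by simp
  have sp2: "summable (\<lambda>n. real (n + 2) powr -2)"
    using summable_ignore_initial_segment[OF sp, of 2] by simp
  have "(\<Sum>n. g (n + 2)) = (\<Sum>n. g n) - (\<Sum>i<2. g i)"
    by (rule suminf_minus_initial_segment, rule summable_norm_cancel[OF sg])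
  then have eq: "(\<Sum>n. g n) - f 1 = (\<Sum>n. g (n + 2))"
    by (simp add: g_def numeral_2_eq_2)
  have bnd: "cmod (g (n + 2)) \<le> 2 powr (2 - x) * real (n + 2) powr -2" for n
  proof -
    have pos: "real (n + 2) \<ge> 2" by simp
    have "cmod (g (n + 2)) \<le> 1 * real (n + 2) powr (- x)"
      unfolding g_def norm_mult using f[of "n+2"]
      by (intro mult_mono) (auto simp: norm_ps)
    also have "real (n + 2) powr (- x) = real (n + 2) powr -2 * real (n + 2) powr (2 - x)"
      by (simp add: powr_add[symmetric])
    also have "real (n + 2) powr (2 - x) \<le> 2 powr (2 - x)"
      using x pos by (intro powr_mono2') auto
    finally show ?thesis by (simp add: mult_left_mono mult.commute)
  qed
  have "cmod ((\<Sum>n. g n) - f 1) \<le> (\<Sum>n. cmod (g (n + 2)))"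
    unfolding eq by (rule summable_norm[OF sg2])
  also have "\<dots> \<le> (\<Sum>n. 2 powr (2 - x) * real (n + 2) powr -2)"
    by (rule suminf_le[OF bnd sg2]) (intro summable_mult sp2)
  also have "\<dots> = 2 powr (2 - x) * (\<Sum>n. real (n + 2) powr -2)"
    by (rule suminf_mult[OF sp2])
  also have "(\<Sum>n. real (n + 2) powr -2) \<le> (\<Sum>n. real n powr -2)"
  proof -
    have "(\<Sum>n. real (n + 2) powr -2) = (\<Sum>n. real n powr -2) - (\<Sum>i<2. real i powr -2)"
      by (rule suminf_minus_initial_segment[OF sp])
    moreover have "(\<Sum>i<2. real i powr -2) \<ge> 0" by (intro sum_nonneg) auto
    ultimately show ?thesis by simp
  qed
  then have "2 powr (2 - x) * (\<Sum>n. real (n + 2) powr -2) \<le> 2 powr (2 - x) * (\<Sum>n. real n powr -2)"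
    by (intro mult_left_mono) auto
  finally show ?thesis by (simp add: g_def)
qed

lemma ser_limit:
  assumes f: "\<And>n. cmod (f n) \<le> 1"
  shows "((\<lambda>x. (\<Sum>n. f n * ps n (of_real x))) \<longlongrightarrow> f 1) at_top"
proof -
  define C where "C = (\<Sum>n. real n powr -2)"
  have "((\<lambda>x::real. 2 powr (2 - x)) \<longlongrightarrow> 0) at_top" by real_asymp
  then have lim0: "((\<lambda>x::real. 2 powr (2 - x) * C) \<longlongrightarrow> 0) at_top"
    by (rule tendsto_mult_left_zero)
  have "((\<lambda>x. (\<Sum>n. f n * ps n (of_real x)) - f 1) \<longlongrightarrow> 0) at_top"
  proof (rule Lim_null_comparison[OF _ lim0])
    show "\<forall>\<^sub>F x in at_top. cmod ((\<Sum>n. f n * ps n (of_real x)) - f 1) \<le> 2 powr (2 - x) * C"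
      using eventually_ge_at_top[of "2::real"]
      by eventually_elim (unfold C_def, rule tail_bound[OF f])
  qed
  then show ?thesis by (simp add: LIM_zero_iff)
qed

lemma Zs_exp: assumes "s \<in> S32" shows "Zs s = exp (Gs s)"
proof -
  obtain c where c: "\<And>s. s \<in> S32 \<Longrightarrow> Zs s * exp (- Gs s) = c" using h_const by blast
  have Z: "((\<lambda>x. Zs (of_real x)) \<longlongrightarrow> 1) at_top"
    using ser_limit[of "\<lambda>_. 1"] by (simp add: Zs_def)
  have G: "((\<lambda>x. Gs (of_real x)) \<longlongrightarrow> 0) at_top"
  proof -
    have "am 1 = 0" by (simp add: am_def)
    then show ?thesis using ser_limit[of "\<lambda>n. of_real (am n)", OF norm_am] by (simp add: Gs_def[abs_def])
  qed
  have "((\<lambda>x. Zs (of_real x) * exp (- Gs (of_real x))) \<longlongrightarrow> 1 * exp (- 0)) at_top"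
    by (intro tendsto_intros Z G)
  moreover have "\<forall>\<^sub>F x in at_top. Zs (of_real x) * exp (- Gs (of_real x)) = c"
    using eventually_gt_at_top[of "2::real"] by eventually_elim (rule c, simp add: S32_def)
  ultimately have "((\<lambda>x::real. c) \<longlongrightarrow> 1) at_top"
    by (simp add: tendsto_cong)
  then have "c = 1" by (simp add: tendsto_const_iff)
  then have one: "Zs s * exp (- Gs s) = 1" using c[OF assms] by simp
  have e: "exp (- Gs s) * exp (Gs s) = 1" by (simp add: exp_minus_inverse mult.commute)
  have "Zs s = Zs s * exp (- Gs s) * exp (Gs s)" by (simp only: mult.assoc e) simp
  also have "\<dots> = exp (Gs s)" by (simp only: one) simp
  finally show ?thesis .
qed

lemma zeta_Zs: assumes "3/2 \<le> Re s" shows "zeta s = Zs s"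
proof -
  have sm: "summable (\<lambda>n. ps n s)"
    using dser_summable'[of "\<lambda>_. 1" s] assms by simp
  have "zeta s = (\<Sum>n. ps (Suc n) s)"
    unfolding zeta_def ps_def by (simp add: powr_minus divide_inverse)
  also have "\<dots> = Zs s" using suminf_split_head[OF sm] by (simp add: Zs_def)
  finally show ?thesis .
qed

definition sig :: real where "sig = 1.5002"
definition cc :: "nat \<Rightarrow> real" where "cc n = am n * real n powr (- sig)"

lemma Re_ps: "Re (ps n (Complex sig t)) = real n powr (- sig) * cos (t * ln (real n))"
proof (cases "n = 0")
  case False
  have "ps n (Complex sig t) = exp (- Complex sig t * of_real (ln (real n)))"
    using False by (simp add: ps_def powr_def)
  also have "Re \<dots> = exp (- sig * ln (real n)) * cos (- t * ln (real n))"
    by (simp add: Re_exp)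
  also have "\<dots> = real n powr (- sig) * cos (t * ln (real n))"
    using False by (simp add: powr_def)
  finally show ?thesis .
qed simp

lemma cc_nonneg: "0 \<le> cc n" by (simp add: cc_def am_nonneg)

lemma cc_le: "cc n \<le> real n powr (- (3/2))"
proof -
  have "cc n \<le> 1 * real n powr (- sig)"
    unfolding cc_def by (intro mult_right_mono am_le1) auto
  also have "\<dots> \<le> real n powr (- (3/2))"
    by (cases "n = 0") (auto simp: sig_def intro!: powr_mono)
  finally show ?thesis .
qed

lemma cc_summable: "summable cc"
  by (rule summable_comparison_test[OF _ summable_powr[of "3/2"]]) (auto simp: cc_nonneg cc_le)

lemma cc_small: "n < 2 \<Longrightarrow> cc n = 0"
  by (auto simp: cc_def am_def less_2_cases_iff)

lemma log_zeta: "ln (cmod (zeta (Complex 1.5002 t))) = (\<Sum>n. cc n * cos (t * ln (real n)))"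
proof -
  have s: "Complex sig t \<in> S32" by (simp add: S32_def sig_def)
  have "zeta (Complex sig t) = exp (Gs (Complex sig t))"
    using zeta_Zs[of "Complex sig t"] Zs_exp[OF s] s by (simp add: S32_def)
  then have "ln (cmod (zeta (Complex sig t))) = Re (Gs (Complex sig t))" by simp
  also have "\<dots> = (\<Sum>n. Re (of_real (am n) * ps n (Complex sig t)))"
    unfolding Gs_def
    by (rule Re_suminf, rule dser_summable'[OF norm_am]) (simp add: sig_def)
  also have "\<dots> = (\<Sum>n. cc n * cos (t * ln (real n)))"
    by (simp add: Re_ps cc_def mult.assoc)
  finally show ?thesis by (simp add: sig_def)
qed

definition gg :: "real \<Rightarrow> real \<Rightarrow> nat \<Rightarrow> real" where
  "gg H T n = cc n * (sin (T * ln (real n)) - sin (H * ln (real n))) / ln (real n)"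

lemma term_integral:
  assumes "H \<le> T"
  shows "((\<lambda>t. cc n * cos (t * ln (real n))) has_integral gg H T n) {H..T}"
proof (cases "n < 2")
  case True
  then show ?thesis by (simp add: cc_small gg_def)
next
  case False
  then have L: "ln (real n) > 0" by simp
  define L' where "L' = ln (real n)"
  have "((\<lambda>t. cc n * sin (t * L') / L') has_vector_derivative cc n * cos (t * L')) (at t within {H..T})" for t
    unfolding has_real_derivative_iff_has_vector_derivative[symmetric] using L
    by (auto intro!: derivative_eq_intros simp: L'_def)
  from fundamental_theorem_of_calculus[OF assms this]
  show ?thesis by (simp add: gg_def L'_def diff_divide_distrib right_diff_distrib)
qed

lemma gg_bound: "\<bar>gg H T n\<bar> \<le> 4 * cc n"
proof (cases "n < 2")
  case True
  then show ?thesis by (simp add: cc_small gg_def)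
next
  case False
  then have "real n \<ge> 2" by simp
  then have L: "ln (real n) \<ge> ln 2" by simp
  have l2: "ln (2::real) \<ge> 1/2" using ln2_ge_two_thirds by simp
  have "\<bar>sin (T * ln (real n)) - sin (H * ln (real n))\<bar> \<le> 2"
    using abs_sin_le_one[of "T * ln (real n)"] abs_sin_le_one[of "H * ln (real n)"] by linarith
  then have "\<bar>gg H T n\<bar> \<le> cc n * 2 / ln (real n)"
    using L l2 cc_nonneg[of n] by (auto simp: gg_def abs_mult abs_divide intro!: divide_right_mono mult_left_mono)
  also have "\<dots> \<le> cc n * 2 / (1/2)"
    using L l2 cc_nonneg[of n] by (intro divide_left_mono) auto
  finally show ?thesis by simp
qed

lemma gg_summable: "summable (gg H T)"
  by (rule summable_comparison_test[OF _ summable_mult[OF cc_summable, of 4]]) (auto simp: gg_bound)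

lemma integral_formula:
  assumes "H \<le> T"
  shows "integral {H..T} (\<lambda>t. \<Sum>n. cc n * cos (t * ln (real n))) = (\<Sum>n. gg H T n)"
proof -
  define f where "f k t = (\<Sum>n<k. cc n * cos (t * ln (real n)))" for k t
  have fint: "(f k has_integral (\<Sum>n<k. gg H T n)) {H..T}" for k
    unfolding f_def by (rule has_integral_sum) (auto intro: term_integral[OF assms])
  have dc: "(\<lambda>k. integral {H..T} (f k)) \<longlonglongrightarrow> integral {H..T} (\<lambda>t. \<Sum>n. cc n * cos (t * ln (real n)))"
  proof (rule dominated_convergence(2)[where h = "\<lambda>_. suminf cc"])
    show "f k integrable_on {H..T}" for k using fint by blast
    show "(\<lambda>_. suminf cc) integrable_on {H..T}" by (rule Henstock_Kurzweil_Integration.integrable_const_ivl)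
    show "norm (f k t) \<le> suminf cc" for k t
    proof -
      have "norm (f k t) \<le> (\<Sum>n<k. \<bar>cc n * cos (t * ln (real n))\<bar>)"
        unfolding f_def real_norm_def by (rule sum_abs)
      also have "\<dots> \<le> (\<Sum>n<k. cc n)"
        by (intro sum_mono) (auto simp: abs_mult cc_nonneg intro!: mult_left_le)
      also have "\<dots> \<le> suminf cc" by (rule sum_le_suminf[OF cc_summable]) (auto simp: cc_nonneg)
      finally show ?thesis .
    qed
    show "(\<lambda>k. f k t) \<longlonglongrightarrow> (\<Sum>n. cc n * cos (t * ln (real n)))" for t
    proof -
      have "summable (\<lambda>n. cc n * cos (t * ln (real n)))"
        by (rule summable_comparison_test[OF _ cc_summable]) (auto simp: abs_mult cc_nonneg intro!: mult_left_le)
      then show ?thesis unfolding f_def by (rule summable_LIMSEQ)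
    qed
  qed
  have "(\<lambda>k. integral {H..T} (f k)) = (\<lambda>k. \<Sum>n<k. gg H T n)"
    using fint by (auto intro: integral_unique)
  with dc have "(\<lambda>k. \<Sum>n<k. gg H T n) \<longlonglongrightarrow> integral {H..T} (\<lambda>t. \<Sum>n. cc n * cos (t * ln (real n)))"
    by simp
  moreover have "(\<lambda>k. \<Sum>n<k. gg H T n) \<longlonglongrightarrow> (\<Sum>n. gg H T n)"
    by (rule summable_LIMSEQ[OF gg_summable])
  ultimately show ?thesis by (rule LIMSEQ_unique)
qed

lemma not_pp_mult:
  assumes "1 < a" "1 < b" "coprime a b"
  shows "\<not> primepow (a * b :: nat)"
proof
  assume "primepow (a * b)"
  then obtain p k where p: "prime p" "k > 0" "a * b = p ^ k" unfolding primepow_def by auto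
  then obtain i j where ij: "a = p ^ i" "b = p ^ j" using prime_power_mult_nat by blast
  with assms have "i > 0" "j > 0" by (auto intro: Nat.gr0I)
  then have "p dvd a" "p dvd b" using ij by auto
  with assms(3) have "is_unit p" using coprime_common_divisor by blast
  with p show False by auto
qed

lemma cc_notpp: "\<not> primepow n \<Longrightarrow> cc n = 0"
  by (simp add: cc_def am_def mangoldt_def)

lemma pp_even: assumes "primepow (n::nat)" "even n" shows "\<exists>k. n = 2 ^ Suc k"
proof -
  obtain p k where p: "prime p" "k > 0" "n = p ^ k" using assms(1) unfolding primepow_def by auto
  have "(2::nat) dvd p ^ k" using assms(2) p by simp
  then have "2 dvd p" using prime_dvd_power[OF two_is_prime_nat] by blast
  then have "p = 2" using primes_dvd_imp_eq[OF two_is_prime_nat p(1)] by simp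
  then show ?thesis using p by (intro exI[of _ "k - 1"]) simp
qed

lemma am_pp: assumes "prime p" "k > 0" shows "am (p ^ k) = 1 / real k"
proof -
  have "p > 1" using assms prime_gt_1_nat by blast
  then have "ln (real p) > 0" by simp
  then show ?thesis using assms by (simp add: am_def ln_realpow)
qed

definition xx :: real where "xx = 2 powr (- sig)"

lemma gg_pow2:
  "gg H T (2 ^ j) = xx ^ j / (real j)^2 * (sin (real j * (T * ln 2)) - sin (real j * (H * ln 2))) / ln 2"
  if "j > 0"
proof -
  have e: "((2::real) ^ j) powr (- sig) = xx ^ j"
  proof -
    have "(2::real) ^ j = 2 powr real j" by (simp add: powr_realpow)
    then have "((2::real) ^ j) powr (- sig) = 2 powr (real j * - sig)" by (simp add: powr_powr)
    also have "\<dots> = xx ^ j" by (simp add: xx_def powr_power)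
    finally show ?thesis .
  qed
  have h: "cc (2 ^ j) = xx ^ j / real j"
    using am_pp[OF two_is_prime_nat that] e by (simp add: cc_def)
  have "gg H T (2 ^ j) = cc (2^j) * (sin (real j * (T * ln 2)) - sin (real j * (H * ln 2))) / (real j * ln 2)"
    by (simp add: gg_def ln_realpow mult_ac)
  also have "\<dots> = xx ^ j / (real j)^2 * (sin (real j * (T * ln 2)) - sin (real j * (H * ln 2))) / ln 2"
    unfolding h using that by (simp add: power2_eq_square)
  finally show ?thesis .
qed

lemma trig2:
  fixes y psi :: real
  assumes y: "0 \<le> y" "32 * y^2 \<le> 1"
  shows "- (sin psi * (1 + y * cos psi)) \<le> 63/62"
proof -
  define s where "s = sin psi"
  define c where "c = cos psi"
  have sc: "s^2 + c^2 = 1" unfolding s_def c_def by simp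
  define Q where "Q = 31 * (1 - y^2) * c^2 - 62 * y * c + 1"
  have yy: "1 - y^2 > 0" using y by simp
  have "31 * (1 - y^2) * Q = (31 * (1 - y^2) * c - 31 * y)^2 + (31 - 992 * y^2)"
    unfolding Q_def by (simp add: power2_eq_square algebra_simps)
  moreover have "31 - 992 * y^2 \<ge> 0" using y by simp
  ultimately have "31 * (1 - y^2) * Q \<ge> 0" by simp
  then have q: "Q \<ge> 0" using yy by (simp add: zero_le_mult_iff)
  have "63 + 62 * (s * (1 + y * c)) = 31 * (s + 1 + y * c)^2 + Q + 31 * (1 - (s^2 + c^2))"
    unfolding Q_def by (simp add: power2_eq_square algebra_simps)
  also have "\<dots> = 31 * (s + 1 + y * c)^2 + Q" using sc by simp
  finally have "63 + 62 * (s * (1 + y * c)) \<ge> 0" using q by simp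
  then show ?thesis unfolding s_def c_def by simp
qed

lemma xx_pos: "0 < xx" by (simp add: xx_def)

lemma xx_sq: "xx^2 \<le> 1/8"
proof -
  have "xx^2 = 2 powr (2 * - sig)" unfolding xx_def using powr_power[of "2::real" "- sig" 2] by simp
  also have "\<dots> \<le> 2 powr (-3)" by (intro powr_mono) (auto simp: sig_def)
  finally show ?thesis by (simp add: powr_minus powr_realpow[symmetric])
qed

lemma xx_lt1: "xx < 1"
proof -
  have "xx^2 < 1^2" using xx_sq by simp
  then show ?thesis using xx_pos by (simp add: power_less_imp_less_base)
qed

definition Sb :: "real \<Rightarrow> nat \<Rightarrow> real" where
  "Sb psi k = xx ^ Suc k / (real (Suc k))^2 * sin (real (Suc k) * psi)"

lemma Sb_abs: "\<bar>Sb psi k\<bar> \<le> xx ^ Suc k"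
proof -
  have "\<bar>Sb psi k\<bar> = xx ^ Suc k / (real (Suc k))^2 * \<bar>sin (real (Suc k) * psi)\<bar>"
    using xx_pos by (simp add: Sb_def abs_mult)
  also have "\<dots> \<le> xx ^ Suc k / 1 * 1"
    using xx_pos by (intro mult_mono divide_left_mono) (auto simp: abs_sin_le_one)
  finally show ?thesis by simp
qed

lemma geo_summable: "summable (\<lambda>k. xx ^ Suc k)"
  using summable_geometric[of xx] xx_pos xx_lt1 by (simp add: summable_mult)

lemma Sb_summable: "summable (Sb psi)"
  by (rule summable_comparison_test[OF _ geo_summable]) (use Sb_abs in simp)

lemma Sb_bound: "(\<Sum>k. Sb psi k) \<ge> - (xx * (63/62) + xx^3 / (9 * (1 - xx)))"
proof -
  have "(\<Sum>k. Sb psi (k + 2)) = (\<Sum>k. Sb psi k) - (\<Sum>i<2. Sb psi i)"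
    by (rule suminf_minus_initial_segment[OF Sb_summable])
  then have split: "(\<Sum>k. Sb psi k) = Sb psi 0 + Sb psi 1 + (\<Sum>k. Sb psi (k + 2))"
    by (simp add: numeral_2_eq_2)
  have first: "Sb psi 0 + Sb psi 1 \<ge> - (xx * (63/62))"
  proof -
    have sd: "sin (2 * psi) = 2 * sin psi * cos psi" by (rule sin_double)
    have "Sb psi 1 = xx^2 / 4 * sin (2 * psi)"
      by (simp add: Sb_def power2_eq_square)
    then have "Sb psi 0 + Sb psi 1 = xx * sin psi + xx^2 / 4 * (2 * sin psi * cos psi)"
      by (simp add: Sb_def sd)
    also have "\<dots> = xx * (sin psi * (1 + (xx/2) * cos psi))"
      by (simp add: power2_eq_square algebra_simps)
    finally have "Sb psi 0 + Sb psi 1 = xx * (sin psi * (1 + (xx/2) * cos psi))" .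
    moreover have "- (sin psi * (1 + (xx/2) * cos psi)) \<le> 63/62"
      using xx_pos xx_sq by (intro trig2) (auto simp: power2_eq_square)
    moreover have "xx * (- (sin psi * (1 + (xx/2) * cos psi))) \<le> xx * (63/62)"
      by (rule mult_left_mono[OF calculation(2)]) (use xx_pos in simp)
    ultimately show ?thesis by simp
  qed
  have gs: "summable (\<lambda>k. xx^3 / 9 * xx ^ k)"
    using summable_geometric[of xx] xx_pos xx_lt1 by (simp add: summable_mult)
  have tl: "(\<Sum>k. Sb psi (k + 2)) \<ge> - (\<Sum>k. xx^3 / 9 * xx ^ k)"
  proof -
    have "(\<Sum>k. - (xx^3 / 9 * xx ^ k)) \<le> (\<Sum>k. Sb psi (k + 2))"
    proof (rule suminf_le)
      fix k
      have "\<bar>Sb psi (k + 2)\<bar> = xx ^ (k+3) / (real (k+3))^2 * \<bar>sin (real (k+3) * psi)\<bar>"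
        using xx_pos by (simp add: Sb_def abs_mult eval_nat_numeral)
      also have "\<dots> \<le> xx ^ (k+3) / 9 * 1"
      proof (intro mult_mono divide_left_mono)
        show "9 \<le> (real (k+3))^2"
          using mult_mono[of 3 "real k + 3" 3 "real k + 3"] by (simp add: power2_eq_square)
      qed (use xx_pos in \<open>auto simp: abs_sin_le_one\<close>)
      also have "\<dots> = xx^3 / 9 * xx ^ k" by (simp add: power_add)
      finally show "- (xx^3 / 9 * xx ^ k) \<le> Sb psi (k + 2)" by linarith
    next
      show "summable (\<lambda>k. - (xx ^ 3 / 9 * xx ^ k))" using summable_minus[OF gs] .
      show "summable (\<lambda>k. Sb psi (k + 2))" using summable_ignore_initial_segment[OF Sb_summable] .
    qed
    then show ?thesis using suminf_minus[OF gs] by simp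
  qed
  have "(\<Sum>k. xx^3 / 9 * xx ^ k) = xx^3 / 9 * (1 / (1 - xx))"
    using suminf_mult[of "\<lambda>k. xx ^ k" "xx^3/9"] suminf_geometric[of xx] xx_pos xx_lt1
      summable_geometric[of xx] by simp
  moreover have "xx^3 / 9 * (1 / (1 - xx)) = xx^3 / (9 * (1 - xx))" by simp
  ultimately show ?thesis using split first tl by linarith
qed

definition w :: "nat \<Rightarrow> real" where
  "w n = (if even n then 0 else 2 * cc n / ln (real n))"

lemma gg_abs2: "\<bar>gg H T n\<bar> \<le> 2 * cc n / ln (real n)"
proof (cases "n < 2")
  case True
  then show ?thesis by (simp add: cc_small gg_def)
next
  case False
  then have L: "ln (real n) > 0" by simp
  have "\<bar>sin (T * ln (real n)) - sin (H * ln (real n))\<bar> \<le> 2"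
    using abs_sin_le_one[of "T * ln (real n)"] abs_sin_le_one[of "H * ln (real n)"] by linarith
  then have "cc n * \<bar>sin (T * ln (real n)) - sin (H * ln (real n))\<bar> \<le> cc n * 2"
    by (rule mult_left_mono[OF _ cc_nonneg])
  then have "cc n * \<bar>sin (T * ln (real n)) - sin (H * ln (real n))\<bar> / ln (real n) \<le> cc n * 2 / ln (real n)"
    using L by (intro divide_right_mono) auto
  then show ?thesis
    using L cc_nonneg[of n] by (simp add: gg_def abs_mult abs_divide mult.commute)
qed

lemma w_nonneg: "0 \<le> w n"
  by (simp add: w_def cc_nonneg)

lemma w_le: "w n \<le> 4 * cc n"
proof (cases "n < 2")
  case True
  then show ?thesis by (simp add: cc_small w_def)
next
  case False
  then have "real n \<ge> 2" by simp
  then have L: "ln (real n) \<ge> ln 2" by simp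
  have l2: "ln (2::real) \<ge> 1/2" using ln2_ge_two_thirds by simp
  have "2 * cc n / ln (real n) \<le> 2 * cc n / (1/2)"
    using L l2 cc_nonneg[of n] by (intro divide_left_mono) auto
  then show ?thesis using cc_nonneg[of n] by (auto simp: w_def)
qed

lemma w_summable: "summable w"
  by (rule summable_comparison_test[OF _ summable_mult[OF cc_summable, of 4]]) (auto simp: w_le w_nonneg)

definition KK :: real where "KK = xx * (63/62) + xx^3 / (9 * (1 - xx))"

lemma main_sum: "(\<Sum>n. gg H T n) \<ge> - (2 / ln 2 * KK) - (\<Sum>n. w n)"
proof -
  define p2 where "p2 n = (if even n then gg H T n else 0)" for n
  define ot where "ot n = (if even n then 0 else gg H T n)" for n
  have gs: "summable (\<lambda>n. \<bar>gg H T n\<bar>)"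
    by (rule summable_comparison_test[OF _ summable_mult[OF cc_summable, of 4]]) (auto simp: gg_bound)
  have sp2: "summable p2"
    by (rule summable_comparison_test[OF _ gs]) (auto simp: p2_def)
  have sot: "summable ot"
    by (rule summable_comparison_test[OF _ gs]) (auto simp: ot_def)
  have "(\<Sum>n. gg H T n) = (\<Sum>n. p2 n + ot n)"
    by (rule suminf_cong) (simp add: p2_def ot_def)
  also have "\<dots> = (\<Sum>n. p2 n) + (\<Sum>n. ot n)" by (rule suminf_add[OF sp2 sot, symmetric])
  finally have split: "(\<Sum>n. gg H T n) = (\<Sum>n. p2 n) + (\<Sum>n. ot n)" .
  have ot_ge: "(\<Sum>n. ot n) \<ge> - (\<Sum>n. w n)"
  proof -
    have "(\<Sum>n. - w n) \<le> (\<Sum>n. ot n)"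
    proof (rule suminf_le[OF _ summable_minus[OF w_summable] sot])
      fix n show "- w n \<le> ot n"
        using gg_abs2[of H T n] by (auto simp: ot_def w_def)
    qed
    then show ?thesis using suminf_minus[OF w_summable] by simp
  qed
  define g where "g k = (2::nat) ^ Suc k" for k
  have smg: "strict_mono g" unfolding g_def by (rule strict_monoI) (simp add: power_strict_increasing)
  have zero: "p2 n = 0" if "n \<notin> range g" for n
  proof (cases "even n")
    case True
    show ?thesis
    proof (cases "primepow n")
      case True
      then obtain k where "n = 2 ^ Suc k" using pp_even \<open>even n\<close> by blast
      then have "n \<in> range g" by (simp add: g_def)
      then show ?thesis using that by simp
    next
      case False
      then show ?thesis by (simp add: p2_def gg_def cc_notpp)
    qed
  qed (simp add: p2_def)
  have "(\<lambda>k. p2 (g k)) sums (\<Sum>n. p2 n)"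
  proof -
    have "(\<lambda>k. p2 (g k)) sums (\<Sum>n. p2 n) \<longleftrightarrow> p2 sums (\<Sum>n. p2 n)"
      by (rule sums_mono_reindex[OF smg]) (rule zero)
    then show ?thesis using summable_sums[OF sp2] by blast
  qed
  moreover have "p2 (g k) = (Sb (T * ln 2) k + Sb (- (H * ln 2)) k) / ln 2" for k
  proof -
    have e1: "Sb (- (H * ln 2)) k = - (xx ^ Suc k / (real (Suc k))^2 * sin (real (Suc k) * (H * ln 2)))"
      unfolding Sb_def by simp
    have e2: "Sb (T * ln 2) k = xx ^ Suc k / (real (Suc k))^2 * sin (real (Suc k) * (T * ln 2))"
      unfolding Sb_def by simp
    show ?thesis
      unfolding p2_def g_def e1 e2 gg_pow2[of "Suc k", OF zero_less_Suc]
      by (simp only: even_power even_numeral if_True zero_less_Suc simp_thms right_diff_distrib diff_divide_distrib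
          add_uminus_conv_diff)
  qed
  ultimately have "(\<lambda>k. (Sb (T * ln 2) k + Sb (- (H * ln 2)) k) / ln 2) sums (\<Sum>n. p2 n)" by simp
  moreover have "(\<lambda>k. (Sb (T * ln 2) k + Sb (- (H * ln 2)) k) / ln 2) sums (((\<Sum>k. Sb (T * ln 2) k) + (\<Sum>k. Sb (- (H * ln 2)) k)) / ln 2)"
    by (intro sums_divide sums_add summable_sums Sb_summable)
  ultimately have "(\<Sum>n. p2 n) = ((\<Sum>k. Sb (T * ln 2) k) + (\<Sum>k. Sb (- (H * ln 2)) k)) / ln 2"
    using sums_unique2 by blast
  moreover have "(\<Sum>k. Sb (T * ln 2) k) + (\<Sum>k. Sb (- (H * ln 2)) k) \<ge> - (2 * KK)"
    using Sb_bound[of "T * ln 2"] Sb_bound[of "- (H * ln 2)"] by (simp add: KK_def)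
  ultimately have "(\<Sum>n. p2 n) \<ge> - (2 * KK) / ln 2"
    using divide_right_mono[of "- (2 * KK)" _ "ln 2"] by simp
  then show ?thesis using split ot_ge by simp
qed

lemma ln_lb:
  fixes x :: real
  assumes "1 \<le> x"
  shows "2 * ((x - 1) / (x + 1) + ((x - 1) / (x + 1))^3 / 3) \<le> ln x"
proof -
  define f where "f t = ln t - 2 * ((t - 1) / (t + 1) + ((t - 1) / (t + 1))^3 / 3)" for t :: real
  have "f 1 \<le> f x"
  proof (rule DERIV_nonneg_imp_nondecreasing[OF assms])
    fix t :: real assume t: "1 \<le> t" "t \<le> x"
    then have tp: "t > 0" "t + 1 > 0" by auto
    define u where "u = (t - 1) / (t + 1)"
    have du: "((\<lambda>t. (t - 1) / (t + 1)) has_real_derivative 2 / (t + 1)^2) (at t)"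
      using tp by (auto intro!: derivative_eq_intros simp: power2_eq_square field_simps)
    have "(f has_real_derivative (1 / t - 2 * (2 / (t + 1)^2 + (3 * u^2 * (2 / (t + 1)^2)) / 3))) (at t)"
      unfolding f_def u_def
      by (rule derivative_eq_intros refl du DERIV_ln_divide tp | simp)+
    moreover have "1 / t - 2 * (2 / (t + 1)^2 + (3 * u^2 * (2 / (t + 1)^2)) / 3) = (t - 1)^4 / (t * (t + 1)^4)"
    proof -
      define A where "A = t + 1"
      have A: "A > 0" using tp by (simp add: A_def)
      have e: "u^2 = (t - 1)^2 / A^2" by (simp add: u_def A_def power_divide)
      have g: "1 / t - 4 / A^2 - 4 * v / A^4 = (A^4 - 4 * t * A^2 - 4 * t * v) / (t * A^4)" for v
        using A tp by (simp add: field_simps)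
      have p: "A^4 - 4 * t * A^2 - 4 * t * (t - 1)^2 = (t - 1)^4"
        by (simp add: A_def power2_eq_square power4_eq_xxxx algebra_simps)
      have "1 / t - 2 * (2 / (t + 1)^2 + (3 * u^2 * (2 / (t + 1)^2)) / 3) = 1 / t - 4 / A^2 - 4 * (t - 1)^2 / A^4"
        unfolding e A_def[symmetric] using A by (simp add: field_simps power2_eq_square power4_eq_xxxx)
      also have "\<dots> = (t - 1)^4 / (t * A^4)" unfolding g p ..
      finally show ?thesis by (simp add: A_def)
    qed
    moreover have "(t - 1)^4 / (t * (t + 1)^4) \<ge> 0" using tp by simp
    ultimately show "\<exists>y. (f has_real_derivative y) (at t) \<and> 0 \<le> y" by auto
  qed
  then show ?thesis by (simp add: f_def)
qed

lemma ln_step: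
  fixes a b la lb :: real
  assumes "0 < a" "a \<le> b" "la \<le> ln a" "lb \<le> la + 2 * ((b - a) / (b + a) + ((b - a) / (b + a))^3 / 3)"
  shows "lb \<le> ln b"
proof -
  have x: "1 \<le> b / a" using assms by simp
  have a0: "a \<noteq> 0" using assms by simp
  have e1: "b / a - 1 = (b - a) / a" using a0 by (simp add: diff_divide_distrib)
  have e2: "b / a + 1 = (b + a) / a" using a0 by (simp add: add_divide_distrib)
  have "((b / a) - 1) / ((b / a) + 1) = (b - a) / (b + a)"
    unfolding e1 e2 using a0 by simp
  with ln_lb[OF x] have "2 * ((b - a) / (b + a) + ((b - a) / (b + a))^3 / 3) \<le> ln (b / a)" by simp
  moreover have "ln (b / a) = ln b - ln a" using assms by (simp add: ln_div)
  ultimately show ?thesis using assms by linarith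
qed

lemma powr_32: "n \<ge> 1 \<Longrightarrow> (n::real) powr (- (3/2)) = 1 / (n * sqrt n)"
proof -
  assume n: "n \<ge> 1"
  have "n powr (1 + 1/2) = n powr 1 * n powr (1/2)" by (rule powr_add)
  also have "\<dots> = n * sqrt n" using n by (simp add: powr_half_sqrt)
  finally have e: "n powr (1 + 1/2) = n * sqrt n" .
  have "n powr (- (3/2)) = inverse (n powr (3/2))" by (rule powr_minus)
  moreover have "(1::real) + 1/2 = 3/2" by simp
  ultimately show ?thesis using e by (simp only: inverse_eq_divide)
qed

lemma core_num:
  fixes n L B :: real
  assumes "0 < L" "1 \<le> n" "0 < B" "(2 / (n * L * B))^2 \<le> n"
  shows "2 * n powr (- (3/2)) / L \<le> B"
proof -
  have r: "2 / (n * L * B) \<le> sqrt n" using assms(4) by (rule real_le_rsqrt)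
  have pos: "0 < n * L * B" "0 < sqrt n" using assms by auto
  have "2 \<le> sqrt n * (n * L * B)" using r pos by (simp add: divide_le_eq mult.commute)
  then have "2 / (n * sqrt n * L) \<le> B" using pos assms by (simp add: divide_le_eq algebra_simps)
  then show ?thesis unfolding powr_32[OF assms(2)] by simp
qed

lemma wnum:
  assumes "2 \<le> n" "odd n" "0 < l" "l \<le> ln (real n)" "0 < B" "(2 / (real n * l * B))^2 \<le> real n"
  shows "w n \<le> B"
proof -
  have L: "ln (real n) > 0" using assms by simp
  have "w n = 2 * cc n / ln (real n)" using assms by (simp add: w_def)
  also have "\<dots> \<le> 2 * real n powr (- (3/2)) / ln (real n)"
    using L cc_le[of n] by (intro divide_right_mono) auto
  also have "\<dots> \<le> 2 * real n powr (- (3/2)) / l"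
    using L assms by (intro divide_left_mono) auto
  also have "\<dots> \<le> B" using assms by (intro core_num) auto
  finally show ?thesis .
qed

lemma wnum_pp:
  assumes "prime p" "0 < k" "odd (p ^ k)" "0 < l" "l \<le> ln (real p)" "0 < B"
    "(2 / (real (p ^ k) * (real k ^ 2 * l) * B))^2 \<le> real (p ^ k)"
  shows "w (p ^ k) \<le> B"
proof -
  define n where "n = p ^ k"
  have p1: "p > 1" using assms prime_gt_1_nat by blast
  then have n2: "n \<ge> 2" unfolding n_def using assms
    by (metis One_nat_def Suc_1 Suc_leI le_trans less_imp_le_nat self_le_power)
  have lnp: "ln (real p) > 0" using p1 by simp
  have lnn: "ln (real n) = real k * ln (real p)" by (simp add: n_def ln_realpow)
  have "w n = 2 * cc n / ln (real n)" using assms by (simp add: w_def n_def)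
  also have "cc n = 1 / real k * real n powr (- sig)"
    using am_pp[OF assms(1,2)] by (simp add: cc_def n_def)
  also have "2 * (1 / real k * real n powr (- sig)) / ln (real n) = 2 * real n powr (- sig) / (real k ^ 2 * ln (real p))"
  proof -
    have g: "2 * (1 / kk * X) / (kk * lp) = 2 * X / (kk ^ 2 * lp)" if "kk > 0" for kk X lp :: real
      using that by (simp add: power2_eq_square)
    show ?thesis unfolding lnn using assms by (intro g) simp
  qed
  also have "\<dots> \<le> 2 * real n powr (- (3/2)) / (real k ^ 2 * ln (real p))"
    using n2 lnp assms by (intro divide_right_mono mult_left_mono powr_mono) (auto simp: sig_def)
  also have "\<dots> \<le> 2 * real n powr (- (3/2)) / (real k ^ 2 * l)"
    using lnp assms by (intro divide_left_mono mult_left_mono mult_pos_pos) auto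
  also have "\<dots> \<le> B"
  proof (rule core_num)
    show "1 \<le> real n" using n2 by simp
  qed (use assms lnp in \<open>auto simp: n_def\<close>)
  finally show ?thesis by (simp add: n_def)
qed

lemma sqrt_tele:
  fixes m :: real
  assumes "3 \<le> m"
  shows "1 / (m * sqrt m) \<le> 1 / sqrt (m - 2) - 1 / sqrt m"
proof -
  define a where "a = sqrt (m - 2)"
  define b where "b = sqrt m"
  have a: "a > 0" "a^2 = m - 2" using assms by (auto simp: a_def)
  have b: "b > 0" "b^2 = m" using assms by (auto simp: b_def)
  have ab: "a \<le> b" using assms by (simp add: a_def b_def)
  have "(b - a) * (b + a) = 2" using a b by (simp add: power2_eq_square algebra_simps)
  then have bma: "b - a = 2 / (a + b)" using a b by (simp add: field_simps)
  have "2 / (a + b) \<ge> 2 / (2 * b)" using a b ab by (intro divide_left_mono) auto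
  then have "b - a \<ge> 1 / b" using bma b by simp
  then have "(b - a) / (a * b) \<ge> (1 / b) / (a * b)" using a b by (intro divide_right_mono) auto
  also have "(1 / b) / (a * b) \<ge> (1 / b) / (b * b)"
    using a b ab by (intro divide_left_mono mult_mono) auto
  finally have "(b - a) / (a * b) \<ge> 1 / (b * b * b)" by (simp add: field_simps)
  moreover have "(b - a) / (a * b) = 1 / a - 1 / b" using a b by (simp add: field_simps)
  moreover have "b * b * b = m * sqrt m" using b by (simp add: b_def power2_eq_square)
  ultimately show ?thesis using assms by (simp add: a_def b_def)
qed

definition FF :: "nat \<Rightarrow> real" where
  "FF n = (if odd n then 1 / sqrt (real n - 2) else 1 / sqrt (real n - 1))"

lemma w_tail_le:
  assumes "51 \<le> n" "0 < l51" "l51 \<le> ln 51"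
  shows "w n \<le> 2 / l51 * (FF n - FF (Suc n))"
proof (cases "odd n")
  case False
  then show ?thesis by (simp add: w_def FF_def)
next
  case True
  have n3: "(3::real) \<le> real n" using assms by simp
  have "ln (51::real) \<le> ln (real n)" using assms(1) by simp
  then have L: "ln (real n) \<ge> l51" using assms by linarith
  have "w n = 2 * cc n / ln (real n)" using True by (simp add: w_def)
  also have "\<dots> \<le> 2 * real n powr (- (3/2)) / ln (real n)"
    using L assms cc_le[of n] by (intro divide_right_mono) auto
  also have "\<dots> \<le> 2 * real n powr (- (3/2)) / l51"
    using L assms by (intro divide_left_mono) auto
  also have "real n powr (- (3/2)) = 1 / (real n * sqrt (real n))"
    by (rule powr_32) (use n3 in simp)
  also have "1 / (real n * sqrt (real n)) \<le> FF n - FF (Suc n)"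
    using sqrt_tele[OF n3] True by (simp add: FF_def)
  finally show ?thesis using assms by (simp add: divide_right_mono mult.commute)
qed

lemma FF_lim: "(\<lambda>n. FF (n + 51)) \<longlonglongrightarrow> 0"
proof (rule Lim_null_comparison)
  have "((\<lambda>n. 1 / sqrt (real n + 49)) \<longlongrightarrow> 0) sequentially" by real_asymp
  then show "(\<lambda>n. 1 / sqrt (real n + 49)) \<longlonglongrightarrow> 0" .
  show "\<forall>\<^sub>F n in sequentially. norm (FF (n + 51)) \<le> 1 / sqrt (real n + 49)"
  proof (intro always_eventually allI)
    fix n :: nat
    show "norm (FF (n + 51)) \<le> 1 / sqrt (real n + 49)"
      by (auto simp: FF_def intro!: divide_left_mono mult_pos_pos)
  qed
qed

lemma tail_sum:
  assumes "0 < l51" "l51 \<le> ln 51"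
  shows "(\<Sum>k. w (k + 51)) \<le> 2 / (7 * l51)"
proof -
  have ts: "(\<lambda>k. FF (k + 51) - FF (Suc (k + 51))) sums (FF (0 + 51) - 0)"
    using telescope_sums'[OF FF_lim] by simp
  then have ts2: "(\<lambda>k. 2 / l51 * (FF (k + 51) - FF (Suc (k + 51)))) sums (2 / l51 * FF 51)"
    by (intro sums_mult) simp
  have "(\<Sum>k. w (k + 51)) \<le> (\<Sum>k. 2 / l51 * (FF (k + 51) - FF (Suc (k + 51))))"
  proof (rule suminf_le)
    show "w (k + 51) \<le> 2 / l51 * (FF (k + 51) - FF (Suc (k + 51)))" for k
      using w_tail_le[of "k + 51" l51] assms by simp
    show "summable (\<lambda>k. w (k + 51))" using summable_ignore_initial_segment[OF w_summable] .
    show "summable (\<lambda>k. 2 / l51 * (FF (k + 51) - FF (Suc (k + 51))))" using ts2 by (rule sums_summable)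
  qed
  also have "\<dots> = 2 / l51 * FF 51" using ts2 by (rule sums_unique[symmetric])
  also have "FF 51 = 1 / 7"
  proof -
    have "sqrt (49::real) = 7" by (simp add: real_sqrt_eq_iff)
    then show ?thesis by (simp add: FF_def)
  qed
  finally show ?thesis by simp
qed

lemma ln43: "2 * (1/7 + (1/7)^3 / 3) \<le> ln (4/3::real)"
  by (rule ln_step[of 1 "4/3" 0]) (simp_all add: power_divide)

lemma ln_2: "0.6929912 \<le> ln (2::real)"
  by (rule ln_step[OF _ _ ln43]) (simp_all add: power_divide)

lemma ln_3: "1.0983245 \<le> ln (3::real)"
  by (rule ln_step[OF _ _ ln_2]) (simp_all add: power_divide)

lemma ln_4: "1.3859824 \<le> ln (4::real)"
  by (rule ln_step[OF _ _ ln_3]) (simp_all add: power_divide)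

lemma ln_5: "1.6091191 \<le> ln (5::real)"
  by (rule ln_step[OF _ _ ln_4]) (simp_all add: power_divide)

lemma ln_6: "1.7914381 \<le> ln (6::real)"
  by (rule ln_step[OF _ _ ln_5]) (simp_all add: power_divide)

lemma ln_7: "1.9455876 \<le> ln (7::real)"
  by (rule ln_step[OF _ _ ln_6]) (simp_all add: power_divide)

lemma ln_8: "2.0791184 \<le> ln (8::real)"
  by (rule ln_step[OF _ _ ln_7]) (simp_all add: power_divide)

lemma ln_9: "2.1969011 \<le> ln (9::real)"
  by (rule ln_step[OF _ _ ln_8]) (simp_all add: power_divide)

lemma ln_10: "2.3022614 \<le> ln (10::real)"
  by (rule ln_step[OF _ _ ln_9]) (simp_all add: power_divide)

lemma ln_11: "2.3975714 \<le> ln (11::real)"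
  by (rule ln_step[OF _ _ ln_10]) (simp_all add: power_divide)

lemma ln_12: "2.4845827 \<le> ln (12::real)"
  by (rule ln_step[OF _ _ ln_11]) (simp_all add: power_divide)

lemma ln_13: "2.5646253 \<le> ln (13::real)"
  by (rule ln_step[OF _ _ ln_12]) (simp_all add: power_divide)

lemma ln_14: "2.6387332 \<le> ln (14::real)"
  by (rule ln_step[OF _ _ ln_13]) (simp_all add: power_divide)

lemma ln_15: "2.707726 \<le> ln (15::real)"
  by (rule ln_step[OF _ _ ln_14]) (simp_all add: power_divide)

lemma ln_16: "2.7722645 \<le> ln (16::real)"
  by (rule ln_step[OF _ _ ln_15]) (simp_all add: power_divide)

lemma ln_17: "2.8328891 \<le> ln (17::real)"
  by (rule ln_step[OF _ _ ln_16]) (simp_all add: power_divide)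

lemma ln_18: "2.8900475 \<le> ln (18::real)"
  by (rule ln_step[OF _ _ ln_17]) (simp_all add: power_divide)

lemma ln_19: "2.9441147 \<le> ln (19::real)"
  by (rule ln_step[OF _ _ ln_18]) (simp_all add: power_divide)

lemma ln_20: "2.9954079 \<le> ln (20::real)"
  by (rule ln_step[OF _ _ ln_19]) (simp_all add: power_divide)

lemma ln_21: "3.044198 \<le> ln (21::real)"
  by (rule ln_step[OF _ _ ln_20]) (simp_all add: power_divide)

lemma ln_22: "3.090718 \<le> ln (22::real)"
  by (rule ln_step[OF _ _ ln_21]) (simp_all add: power_divide)

lemma ln_23: "3.1351697 \<le> ln (23::real)"
  by (rule ln_step[OF _ _ ln_22]) (simp_all add: power_divide)

lemma ln_24: "3.1777293 \<le> ln (24::real)"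
  by (rule ln_step[OF _ _ ln_23]) (simp_all add: power_divide)

lemma ln_25: "3.2185512 \<le> ln (25::real)"
  by (rule ln_step[OF _ _ ln_24]) (simp_all add: power_divide)

lemma ln_26: "3.2577719 \<le> ln (26::real)"
  by (rule ln_step[OF _ _ ln_25]) (simp_all add: power_divide)

lemma ln_27: "3.2955122 \<le> ln (27::real)"
  by (rule ln_step[OF _ _ ln_26]) (simp_all add: power_divide)

lemma ln_28: "3.3318798 \<le> ln (28::real)"
  by (rule ln_step[OF _ _ ln_27]) (simp_all add: power_divide)

lemma ln_29: "3.3669711 \<le> ln (29::real)"
  by (rule ln_step[OF _ _ ln_28]) (simp_all add: power_divide)

lemma ln_30: "3.4008726 \<le> ln (30::real)"
  by (rule ln_step[OF _ _ ln_29]) (simp_all add: power_divide)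

lemma ln_31: "3.4336624 \<le> ln (31::real)"
  by (rule ln_step[OF _ _ ln_30]) (simp_all add: power_divide)

lemma ln_32: "3.465411 \<le> ln (32::real)"
  by (rule ln_step[OF _ _ ln_31]) (simp_all add: power_divide)

lemma ln_33: "3.4961826 \<le> ln (33::real)"
  by (rule ln_step[OF _ _ ln_32]) (simp_all add: power_divide)

lemma ln_34: "3.5260355 \<le> ln (34::real)"
  by (rule ln_step[OF _ _ ln_33]) (simp_all add: power_divide)

lemma ln_35: "3.555023 \<le> ln (35::real)"
  by (rule ln_step[OF _ _ ln_34]) (simp_all add: power_divide)

lemma ln_36: "3.5831938 \<le> ln (36::real)"
  by (rule ln_step[OF _ _ ln_35]) (simp_all add: power_divide)

lemma ln_37: "3.6105927 \<le> ln (37::real)"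
  by (rule ln_step[OF _ _ ln_36]) (simp_all add: power_divide)

lemma ln_38: "3.6372609 \<le> ln (38::real)"
  by (rule ln_step[OF _ _ ln_37]) (simp_all add: power_divide)

lemma ln_39: "3.6632363 \<le> ln (39::real)"
  by (rule ln_step[OF _ _ ln_38]) (simp_all add: power_divide)

lemma ln_40: "3.6885541 \<le> ln (40::real)"
  by (rule ln_step[OF _ _ ln_39]) (simp_all add: power_divide)

lemma ln_41: "3.7132467 \<le> ln (41::real)"
  by (rule ln_step[OF _ _ ln_40]) (simp_all add: power_divide)

lemma ln_42: "3.7373442 \<le> ln (42::real)"
  by (rule ln_step[OF _ _ ln_41]) (simp_all add: power_divide)

lemma ln_43: "3.7608746 \<le> ln (43::real)"
  by (rule ln_step[OF _ _ ln_42]) (simp_all add: power_divide)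

lemma ln_44: "3.7838641 \<le> ln (44::real)"
  by (rule ln_step[OF _ _ ln_43]) (simp_all add: power_divide)

lemma ln_45: "3.8063369 \<le> ln (45::real)"
  by (rule ln_step[OF _ _ ln_44]) (simp_all add: power_divide)

lemma ln_46: "3.8283158 \<le> ln (46::real)"
  by (rule ln_step[OF _ _ ln_45]) (simp_all add: power_divide)

lemma ln_47: "3.849822 \<le> ln (47::real)"
  by (rule ln_step[OF _ _ ln_46]) (simp_all add: power_divide)

lemma ln_48: "3.8708754 \<le> ln (48::real)"
  by (rule ln_step[OF _ _ ln_47]) (simp_all add: power_divide)

lemma ln_49: "3.8914946 \<le> ln (49::real)"
  by (rule ln_step[OF _ _ ln_48]) (simp_all add: power_divide)

lemma ln_50: "3.9116973 \<le> ln (50::real)"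
  by (rule ln_step[OF _ _ ln_49]) (simp_all add: power_divide)

lemma ln_51: "3.9314999 \<le> ln (51::real)"
  by (rule ln_step[OF _ _ ln_50]) (simp_all add: power_divide)

lemma prime_3: "prime (3::nat)" by code_simp
lemma prime_5: "prime (5::nat)" by code_simp
lemma prime_7: "prime (7::nat)" by code_simp

lemma w_3: "w 3 \<le> 0.350444"
  using wnum[of 3 "1.0983245" "0.350444"] ln_3 by (simp add: power_divide)

lemma w_5: "w 5 \<le> 0.11117"
  using wnum[of 5 "1.6091191" "0.11117"] ln_5 by (simp add: power_divide)

lemma w_7: "w 7 \<le> 0.055506"
  using wnum[of 7 "1.9455876" "0.055506"] ln_7 by (simp add: power_divide)

lemma w_9: "w 9 \<le> 0.016861"
  using wnum_pp[of 3 2 "1.0983245" "0.016861"] ln_3 prime_3 by (simp add: power_divide)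

lemma w_11: "w 11 \<le> 0.022865"
  using wnum[of 11 "2.3975714" "0.022865"] ln_11 by (simp add: power_divide)

lemma w_13: "w 13 \<le> 0.016638"
  using wnum[of 13 "2.5646253" "0.016638"] ln_13 by (simp add: power_divide)

lemma w_17: "w 17 \<le> 0.010073"
  using wnum[of 17 "2.8328891" "0.010073"] ln_17 by (simp add: power_divide)

lemma w_19: "w 19 \<le> 0.008203"
  using wnum[of 19 "2.9441147" "0.008203"] ln_19 by (simp add: power_divide)

lemma w_23: "w 23 \<le> 0.005784"
  using wnum[of 23 "3.1351697" "0.005784"] ln_23 by (simp add: power_divide)

lemma w_25: "w 25 \<le> 0.002486"
  using wnum_pp[of 5 2 "1.6091191" "0.002486"] ln_5 prime_5 by (simp add: power_divide)

lemma w_27: "w 27 \<le> 0.001443"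
  using wnum_pp[of 3 3 "1.0983245" "0.001443"] ln_3 prime_3 by (simp add: power_divide)

lemma w_29: "w 29 \<le> 0.003804"
  using wnum[of 29 "3.3669711" "0.003804"] ln_29 by (simp add: power_divide)

lemma w_31: "w 31 \<le> 0.003375"
  using wnum[of 31 "3.4336624" "0.003375"] ln_31 by (simp add: power_divide)

lemma w_37: "w 37 \<le> 0.002462"
  using wnum[of 37 "3.6105927" "0.002462"] ln_37 by (simp add: power_divide)

lemma w_41: "w 41 \<le> 0.002052"
  using wnum[of 41 "3.7132467" "0.002052"] ln_41 by (simp add: power_divide)

lemma w_43: "w 43 \<le> 0.001886"
  using wnum[of 43 "3.7608746" "0.001886"] ln_43 by (simp add: power_divide)

lemma w_47: "w 47 \<le> 0.001613"
  using wnum[of 47 "3.849822" "0.001613"] ln_47 by (simp add: power_divide)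

lemma w_49: "w 49 \<le> 0.00075"
  using wnum_pp[of 7 2 "1.9455876" "0.00075"] ln_7 prime_7 by (simp add: power_divide)

lemma w_15: "w 15 = 0"
  using not_pp_mult[of 3 5] cc_notpp[of 15] by (simp add: w_def coprime_iff_gcd_eq_1 gcd_non_0_nat)

lemma w_21: "w 21 = 0"
  using not_pp_mult[of 3 7] cc_notpp[of 21] by (simp add: w_def coprime_iff_gcd_eq_1 gcd_non_0_nat)

lemma w_33: "w 33 = 0"
  using not_pp_mult[of 3 11] cc_notpp[of 33] by (simp add: w_def coprime_iff_gcd_eq_1 gcd_non_0_nat)

lemma w_35: "w 35 = 0"
  using not_pp_mult[of 5 7] cc_notpp[of 35] by (simp add: w_def coprime_iff_gcd_eq_1 gcd_non_0_nat)

lemma w_39: "w 39 = 0"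
  using not_pp_mult[of 3 13] cc_notpp[of 39] by (simp add: w_def coprime_iff_gcd_eq_1 gcd_non_0_nat)

lemma w_45: "w 45 = 0"
  using not_pp_mult[of 5 9] cc_notpp[of 45] by (simp add: w_def coprime_iff_gcd_eq_1 gcd_non_0_nat)

lemma w_even: "even n \<Longrightarrow> w n = 0" by (simp add: w_def)
lemma w_1: "w 1 = 0" "w (Suc 0) = 0" by (simp_all add: w_def cc_small)

lemma w_head: "(\<Sum>n<51. w n) \<le> 0.617415"
proof -
  have "(\<Sum>n<51. w n) = w 3 + w 5 + w 7 + w 9 + w 11 + w 13 + w 17 + w 19 + w 23 + w 25 + w 27
      + w 29 + w 31 + w 37 + w 41 + w 43 + w 47 + w 49"
    by (simp add: lessThan_nat_numeral w_even w_1 w_15 w_21 w_33 w_35 w_39 w_45)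
  then have "(\<Sum>n<51. w n) \<le> 617415 / 1000000"
    using w_3[simplified] w_5[simplified] w_7[simplified] w_9[simplified] w_11[simplified]
      w_13[simplified] w_17[simplified] w_19[simplified] w_23[simplified] w_25[simplified]
      w_27[simplified] w_29[simplified] w_31[simplified] w_37[simplified] w_41[simplified]
      w_43[simplified] w_47[simplified] w_49[simplified]
    by linarith
  then show ?thesis by simp
qed

lemma w_total: "(\<Sum>n. w n) \<le> 0.690089"
proof -
  have "(\<Sum>n. w n) = (\<Sum>n. w (n + 51)) + (\<Sum>n<51. w n)"
    by (rule suminf_split_initial_segment[OF w_summable])
  moreover have "(\<Sum>n. w (n + 51)) \<le> 2 / (7 * 3.9314999)"
    by (rule tail_sum) (use ln_51 in simp_all)
  moreover have "2 / (7 * 3.9314999) \<le> (72674 / 1000000::real)" by simp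
  ultimately have "(\<Sum>n. w n) \<le> 690089 / 1000000" using w_head[simplified] by linarith
  then show ?thesis by simp
qed

lemma xx_le: "xx \<le> 0.35356"
proof -
  have "xx^2 \<le> 0.35356^2" using xx_sq by (simp add: power2_eq_square)
  then show ?thesis using power2_le_imp_le[of xx "0.35356"] by simp
qed

lemma KK_bound: "2 / ln 2 * KK \<le> 1.05878"
proof -
  define b where "b = (0.35356::real)"
  have x0: "0 \<le> xx" "xx \<le> b" using xx_pos xx_le by (auto simp: b_def)
  have "xx^3 \<le> b^3" using x0 by (intro power_mono) auto
  moreover have "9 * (1 - b) \<le> 9 * (1 - xx)" using x0 by simp
  moreover have "0 < 9 * (1 - b)" by (simp add: b_def)
  ultimately have t2: "xx^3 / (9 * (1 - xx)) \<le> b^3 / (9 * (1 - b))"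
    using x0 by (intro frac_le) auto
  have t1: "xx * (63/62) \<le> b * (63/62)" using x0 by simp
  have KKb: "KK \<le> b * (63/62) + b^3 / (9 * (1 - b))" unfolding KK_def using t1 t2 by linarith
  have KK0: "0 \<le> KK" unfolding KK_def using x0 xx_lt1 by simp
  have l2: "0.6929912 \<le> ln (2::real)" by (rule ln_2)
  have "2 / ln 2 * KK \<le> 2 / 0.6929912 * KK"
    using l2 KK0 by (intro mult_right_mono divide_left_mono) auto
  also have "\<dots> \<le> 2 / 0.6929912 * (b * (63/62) + b^3 / (9 * (1 - b)))"
    using KKb by (intro mult_left_mono) auto
  also have "\<dots> \<le> 1.05878" by (simp add: b_def power_divide)
  finally show ?thesis .
qed

theorem lemma4p1:
  fixes H T :: real
  assumes "2 \<le> H" and "H \<le> T"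
  shows "integral {H..T} (\<lambda>t. ln (cmod (zeta (Complex 1.5002 t)))) \<ge> -1.7655"
proof -
  have "integral {H..T} (\<lambda>t. ln (cmod (zeta (Complex 1.5002 t))))
      = integral {H..T} (\<lambda>t. \<Sum>n. cc n * cos (t * ln (real n)))"
    by (simp only: log_zeta)
  also have "\<dots> = (\<Sum>n. gg H T n)" by (rule integral_formula[OF assms(2)])
  finally have e: "integral {H..T} (\<lambda>t. ln (cmod (zeta (Complex 1.5002 t)))) = (\<Sum>n. gg H T n)" .
  have "(\<Sum>n. gg H T n) \<ge> - (2 / ln 2 * KK) - (\<Sum>n. w n)" by (rule main_sum)
  moreover have "2 / ln 2 * KK \<le> 105878 / 100000" using KK_bound by simp
  moreover have "(\<Sum>n. w n) \<le> 690089 / 1000000" using w_total by simp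
  ultimately have "(\<Sum>n. gg H T n) \<ge> - 17655 / 10000" by linarith
  then show ?thesis using e by simp
qed

end
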